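(* Let $A\in\mathbb{R}^{n\times n}$, $B\in\mathbb{R}^{n\times r}$, $j_{\max}\ge1$, $0<\varepsilon<1$, and shifts $\alpha_1,\ldots,\alpha_{j_{\max}}\in\mathbb{C}$ with $\mathrm{Re}(\alpha_j)<0$, $A+\alpha_jI$ nonsingular, and $\|\mathcal{C}_j\|<1$ for $j=1,\ldots,j_{\max}$. Run the inexact LR-ADI iteration (with $M=I$) of the context, and suppose that for all $1\le k\le j_{\max}$ $$\|s_k\|\le\tfrac12\Big(\sqrt{\|w_{k-1}\|^2+\tfrac{2\varepsilon}{\sigma_k\gamma_k^2j_{\max}}}-\|w_{k-1}\|\Big),\qquad \sigma_k:=\|(A+\alpha_kI)^{-1}\|.$$ Then $\|\mathcal{R}^{\mathrm{true}}_{j_{\max}}\|\le\|\mathcal{R}^{\mathrm{exact}}_{j_{\max}}\|+2\varepsilon$.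
   Context: $\mathcal{C}_k:=(A+\alpha_kI)^{-1}(A-\overline{\alpha_k}I)$. Inexact LR-ADI iteration: $w_0:=B$, $\gamma_k:=\sqrt{-2\,\mathrm{Re}(\alpha_k)}$; $v_k$ arbitrary with $s_k:=w_{k-1}-(A+\alpha_kI)v_k$, $w_k:=w_{k-1}+\gamma_k^2v_k$, $Z_k:=[\gamma_1v_1,\ldots,\gamma_kv_k]$. True residual $\mathcal{R}^{\mathrm{true}}_k:=AZ_kZ_k^*+Z_kZ_k^*A^*+BB^*$. Exact LR-ADI residual (all $s_k=0$, same shifts): $\mathcal{R}^{\mathrm{exact}}_k:=w^{\mathrm{exact}}_k(w^{\mathrm{exact}}_k)^*$ with $w^{\mathrm{exact}}_k:=\mathcal{C}_k\cdots\mathcal{C}_1B$. Norms are spectral. *)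

theory Defs
  imports "HOL-Analysis.Analysis"
begin

definition cmat :: "real^'c^'m \<Rightarrow> complex^'c^'m" where
  "cmat M = (\<chi> i j. complex_of_real (M $ i $ j))"

definition cadj :: "complex^'c^'m \<Rightarrow> complex^'m^'c" where
  "cadj M = (\<chi> i j. cnj (M $ j $ i))"

definition spnorm :: "complex^'c^'m \<Rightarrow> real" where
  "spnorm M = onorm (\<lambda>x::complex^'c. M *v x)"

definition cayley :: "real^'n^'n \<Rightarrow> complex \<Rightarrow> complex^'n^'n" where
  "cayley A a = matrix_inv (cmat A + mat a) ** (cmat A - mat (cnj a))"

definition gsq :: "complex \<Rightarrow> real" where
  "gsq a = - 2 * Re a"

text \<open>Inexact LR-ADI: w_0 = B, w_k = w_{k-1} + gamma_k^2 v_k (shifts/iterates indexed from 1).\<close>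
fun adi_w :: "real^'r^'n \<Rightarrow> (nat \<Rightarrow> complex) \<Rightarrow> (nat \<Rightarrow> complex^'r^'n) \<Rightarrow> nat \<Rightarrow> complex^'r^'n" where
  "adi_w B al v 0 = cmat B"
| "adi_w B al v (Suc k) = adi_w B al v k + gsq (al (Suc k)) *\<^sub>R v (Suc k)"

definition adi_s :: "real^'n^'n \<Rightarrow> real^'r^'n \<Rightarrow> (nat \<Rightarrow> complex) \<Rightarrow> (nat \<Rightarrow> complex^'r^'n) \<Rightarrow> nat \<Rightarrow> complex^'r^'n" where
  "adi_s A B al v k = adi_w B al v (k - 1) - (cmat A + mat (al k)) ** v k"

text \<open>Z_k Z_k^* with Z_k = [gamma_1 v_1, ..., gamma_k v_k]; since gamma_i is real,
  Z_k Z_k^* = sum_{i=1}^k gamma_i^2 v_i v_i^*.\<close>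
definition adi_ZZ :: "(nat \<Rightarrow> complex) \<Rightarrow> (nat \<Rightarrow> complex^'r^'n) \<Rightarrow> nat \<Rightarrow> complex^'n^'n" where
  "adi_ZZ al v k = (\<Sum>i=1..k. gsq (al i) *\<^sub>R (v i ** cadj (v i)))"

definition res_true :: "real^'n^'n \<Rightarrow> real^'r^'n \<Rightarrow> (nat \<Rightarrow> complex) \<Rightarrow> (nat \<Rightarrow> complex^'r^'n) \<Rightarrow> nat \<Rightarrow> complex^'n^'n" where
  "res_true A B al v k = cmat A ** adi_ZZ al v k + adi_ZZ al v k ** cadj (cmat A) + cmat B ** cadj (cmat B)"

fun w_exact :: "real^'n^'n \<Rightarrow> real^'r^'n \<Rightarrow> (nat \<Rightarrow> complex) \<Rightarrow> nat \<Rightarrow> complex^'r^'n" where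
  "w_exact A B al 0 = cmat B"
| "w_exact A B al (Suc k) = cayley A (al (Suc k)) ** w_exact A B al k"

definition res_exact :: "real^'n^'n \<Rightarrow> real^'r^'n \<Rightarrow> (nat \<Rightarrow> complex) \<Rightarrow> nat \<Rightarrow> complex^'n^'n" where
  "res_exact A B al k = w_exact A B al k ** cadj (w_exact A B al k)"

end

theory Submission
  imports Defs
begin

type_synonym ('c,'m) cm = "complex^'c^'m"

lemma blin: "bounded_linear (\<lambda>x. (M::complex^'c^'m) *v x)"
  using matrix_vector_mul_bounded_linear[of M] by (simp add: eta_contract_eq)

lemma sp_nonneg: "0 \<le> spnorm M"
  unfolding spnorm_def by (rule onorm_pos_le[OF blin])

lemma sp_apply: "norm (M *v x) \<le> spnorm M * norm x"
  unfolding spnorm_def by (rule onorm[OF blin])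

lemma sp_bound: "0 \<le> b \<Longrightarrow> (\<And>x. norm (M *v x) \<le> b * norm x) \<Longrightarrow> spnorm M \<le> b"
  unfolding spnorm_def by (rule onorm_bound) auto

lemma sp_mult: "spnorm (M ** N) \<le> spnorm M * spnorm N"
proof (rule sp_bound)
  show "0 \<le> spnorm M * spnorm N" by (simp add: sp_nonneg)
  fix x
  have "norm ((M ** N) *v x) = norm (M *v (N *v x))" by (simp add: matrix_vector_mul_assoc)
  also have "\<dots> \<le> spnorm M * norm (N *v x)" by (rule sp_apply)
  also have "\<dots> \<le> spnorm M * (spnorm N * norm x)" by (intro mult_left_mono sp_apply sp_nonneg)
  finally show "norm ((M ** N) *v x) \<le> spnorm M * spnorm N * norm x" by (simp add: mult.assoc)
qed

lemma sp_add: "spnorm (M + N) \<le> spnorm M + spnorm N"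
proof (rule sp_bound)
  show "0 \<le> spnorm M + spnorm N" by (simp add: sp_nonneg)
  fix x
  have "norm ((M + N) *v x) \<le> norm (M *v x) + norm (N *v x)"
    by (simp add: matrix_vector_mult_add_rdistrib norm_triangle_ineq)
  also have "\<dots> \<le> spnorm M * norm x + spnorm N * norm x" by (intro add_mono sp_apply)
  finally show "norm ((M + N) *v x) \<le> (spnorm M + spnorm N) * norm x" by (simp add: algebra_simps)
qed

lemma scaleR_mv: "((c::real) *\<^sub>R (M::complex^'c^'m)) *v x = c *\<^sub>R (M *v x)"
  by (simp add: vec_eq_iff matrix_vector_mult_def scaleR_sum_right)

lemma sp_scaleR: "spnorm (c *\<^sub>R M) = \<bar>c\<bar> * spnorm M"
  unfolding spnorm_def scaleR_mv by (rule onorm_scaleR[OF blin])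

lemma sp_uminus: "spnorm (- M) = spnorm M"
proof -
  have "(\<lambda>x. (- M) *v x) = (\<lambda>x. - (M *v x))"
    by (simp add: vec_eq_iff matrix_vector_mult_def sum_negf fun_eq_iff)
  then show ?thesis unfolding spnorm_def by (simp add: onorm_neg)
qed

lemma sp_diff: "spnorm (M - N) \<le> spnorm M + spnorm N"
  using sp_add[of M "-N"] by (simp add: sp_uminus)

lemma sp_mat1: "spnorm (mat 1 :: complex^'n^'n) \<le> 1"
  by (rule sp_bound) auto

lemma inner_cplx: "inner (a::complex) b = Re (a * cnj b)"
  by (simp add: inner_complex_def)

lemma inner_adj: "inner ((M::complex^'c^'m) *v x) y = inner x (cadj M *v y)"
proof -
  have "inner (M *v x) y = Re (\<Sum>i\<in>UNIV. \<Sum>j\<in>UNIV. M$i$j * x$j * cnj (y$i))"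
    by (simp add: inner_vec_def inner_cplx matrix_vector_mult_def sum_distrib_right Re_sum)
  also have "\<dots> = Re (\<Sum>j\<in>UNIV. \<Sum>i\<in>UNIV. M$i$j * x$j * cnj (y$i))"
    by (subst sum.swap) simp
  also have "\<dots> = inner x (cadj M *v y)"
    by (simp add: inner_vec_def inner_cplx matrix_vector_mult_def cadj_def sum_distrib_left Re_sum mult_ac)
  finally show ?thesis .
qed

lemma cadj_cadj[simp]: "cadj (cadj M) = M"
  by (simp add: cadj_def vec_eq_iff)

lemma cstar: "(spnorm M)\<^sup>2 \<le> spnorm (cadj M ** M)"
proof -
  have "norm (M *v x) \<le> sqrt (spnorm (cadj M ** M)) * norm x" for x
  proof -
    have "(norm (M *v x))\<^sup>2 = inner (M *v x) (M *v x)" by (simp add: power2_norm_eq_inner)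
    also have "\<dots> = inner x ((cadj M ** M) *v x)" by (simp add: inner_adj matrix_vector_mul_assoc)
    also have "\<dots> \<le> norm x * norm ((cadj M ** M) *v x)" by (rule norm_cauchy_schwarz)
    also have "\<dots> \<le> norm x * (spnorm (cadj M ** M) * norm x)" by (intro mult_left_mono sp_apply) auto
    also have "\<dots> = (sqrt (spnorm (cadj M ** M)) * norm x)\<^sup>2"
      by (simp add: power_mult_distrib sp_nonneg power2_eq_square)
    finally show ?thesis
      by (rule power2_le_imp_le) (simp add: sp_nonneg)
  qed
  then have "spnorm M \<le> sqrt (spnorm (cadj M ** M))"
    by (intro sp_bound) (auto simp: sp_nonneg)
  then have "(spnorm M)\<^sup>2 \<le> (sqrt (spnorm (cadj M ** M)))\<^sup>2"
    by (rule power_mono) (simp add: sp_nonneg)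
  then show ?thesis by (simp add: sp_nonneg)
qed

lemma sp_cadj_le: "spnorm M \<le> spnorm (cadj M)"
proof (cases "spnorm M = 0")
  case True then show ?thesis by (simp add: sp_nonneg)
next
  case False
  then have pos: "0 < spnorm M" using sp_nonneg[of M] by linarith
  have "spnorm M * spnorm M \<le> spnorm (cadj M) * spnorm M"
    using cstar[of M] sp_mult[of "cadj M" M] by (simp add: power2_eq_square)
  then show ?thesis using pos by simp
qed

lemma sp_cadj: "spnorm (cadj M) = spnorm M"
  using sp_cadj_le[of M] sp_cadj_le[of "cadj M"] by simp

lemma sp_rank: "spnorm (M ** cadj M) = (spnorm M)\<^sup>2"
proof (rule antisym)
  show "spnorm (M ** cadj M) \<le> (spnorm M)\<^sup>2"
    using sp_mult[of M "cadj M"] by (simp add: sp_cadj power2_eq_square)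
  show "(spnorm M)\<^sup>2 \<le> spnorm (M ** cadj M)"
    using cstar[of "cadj M"] by (simp add: sp_cadj)
qed

lemma mm_rdistrib: "((X::complex^'c^'m) + Y) ** Z = X ** Z + Y ** Z"
  by (simp add: matrix_matrix_mult_def vec_eq_iff sum.distrib distrib_right)
lemma mm_ldistrib: "(X::complex^'c^'m) ** (Y + Z) = X ** Y + X ** Z"
  by (rule matrix_add_ldistrib)
lemma mm_rdiff: "((X::complex^'c^'m) - Y) ** Z = X ** Z - Y ** Z"
  by (simp add: matrix_matrix_mult_def vec_eq_iff sum_subtractf left_diff_distrib)
lemma mm_ldiff: "(X::complex^'c^'m) ** (Y - Z) = X ** Y - X ** Z"
  by (simp add: matrix_matrix_mult_def vec_eq_iff sum_subtractf right_diff_distrib)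
lemma mm_sl: "((k::real) *\<^sub>R (X::complex^'c^'m)) ** Y = k *\<^sub>R (X ** Y)"
  by (simp add: matrix_matrix_mult_def vec_eq_iff scaleR_sum_right)
lemma mm_sr: "(X::complex^'c^'m) ** ((k::real) *\<^sub>R Y) = k *\<^sub>R (X ** Y)"
  by (simp add: matrix_matrix_mult_def vec_eq_iff scaleR_sum_right)
lemma cadj_add: "cadj (X + Y) = cadj X + cadj Y"
  by (simp add: cadj_def vec_eq_iff)
lemma cadj_diff: "cadj (X - Y) = cadj X - cadj Y"
  by (simp add: cadj_def vec_eq_iff)
lemma cadj_scaleR: "cadj ((k::real) *\<^sub>R X) = k *\<^sub>R cadj X"
  by (simp add: cadj_def vec_eq_iff)
lemma cadj_mult: "cadj ((X::complex^'c^'m) ** Y) = cadj Y ** cadj X"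
  by (simp add: cadj_def vec_eq_iff matrix_matrix_mult_def mult.commute)
lemma cadj_mat: "cadj (mat a) = mat (cnj a)"
  by (simp add: cadj_def vec_eq_iff mat_def)
lemma mat_left: "mat a ** (X::complex^'c^'m) = (\<chi> i j. a * X$i$j)"
  by (simp add: matrix_matrix_mult_def vec_eq_iff mat_def if_distrib if_distribR cong: if_cong)
lemma mat_right: "(X::complex^'c^'m) ** mat a = (\<chi> i j. X$i$j * a)"
  by (simp add: matrix_matrix_mult_def vec_eq_iff mat_def if_distrib if_distribR cong: if_cong)

lemma mat_conj_sum: "mat a ** (X::complex^'n^'n) + X ** mat (cnj a) = (- gsq a) *\<^sub>R X"
  by (simp add: mat_left mat_right vec_eq_iff gsq_def) (simp add: complex_eq_iff algebra_simps)

lemma step_id: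
  fixes v s w :: "complex^'r^'n" and K :: "complex^'n^'n"
  assumes "w = s + (K + mat a) ** v" and "g = gsq a"
  shows "(w + g *\<^sub>R v) ** cadj (w + g *\<^sub>R v) = w ** cadj w + g *\<^sub>R (s ** cadj v + v ** cadj s)
     + g *\<^sub>R (K ** (v ** cadj v) + (v ** cadj v) ** cadj K)"
proof -
  let ?P = "v ** cadj v"
  have e1: "(w + g *\<^sub>R v) ** cadj (w + g *\<^sub>R v) = w ** cadj w + g *\<^sub>R (w ** cadj v + v ** cadj w) + (g*g) *\<^sub>R ?P"
    by (simp add: cadj_add cadj_scaleR mm_rdistrib mm_ldistrib mm_sl mm_sr algebra_simps)
  have e2: "w ** cadj v = s ** cadj v + K ** ?P + mat a ** ?P"
    by (simp add: assms(1) mm_rdistrib matrix_mul_assoc)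
  have e3: "v ** cadj w = v ** cadj s + ?P ** cadj K + ?P ** mat (cnj a)"
    by (simp add: assms(1) cadj_add cadj_mult cadj_mat mm_ldistrib matrix_mul_assoc)
  have e4: "w ** cadj v + v ** cadj w = (s ** cadj v + v ** cadj s) + (K ** ?P + ?P ** cadj K) + (- g) *\<^sub>R ?P"
    using mat_conj_sum[of a ?P] unfolding e2 e3 assms(2) by (simp add: algebra_simps)
  show ?thesis unfolding e1 e4 by (simp add: algebra_simps)
qed

lemma sp_zero: "spnorm (0::complex^'c^'m) = 0"
  using sp_bound[of 0 "0::complex^'c^'m"] sp_nonneg[of "0::complex^'c^'m"] by simp

lemma sp_sum: "finite I \<Longrightarrow> spnorm (\<Sum>i\<in>I. (f i :: complex^'c^'m)) \<le> (\<Sum>i\<in>I. spnorm (f i))"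
proof (induction I rule: finite_induct)
  case empty then show ?case by (simp add: sp_zero)
next
  case (insert x F)
  then show ?case using sp_add[of "f x" "sum f F"] by simp
qed

lemma res_id:
  "res_true A B al v k = adi_w B al v k ** cadj (adi_w B al v k)
     - (\<Sum>i=1..k. gsq (al i) *\<^sub>R (adi_s A B al v i ** cadj (v i) + v i ** cadj (adi_s A B al v i)))"
proof (induction k)
  case 0
  then show ?case by (simp add: res_true_def adi_ZZ_def)
next
  case (Suc k)
  let ?K = "cmat A" and ?g = "gsq (al (Suc k))" and ?v = "v (Suc k)" and ?s = "adi_s A B al v (Suc k)"
  let ?w = "adi_w B al v k"
  have ZZ: "adi_ZZ al v (Suc k) = adi_ZZ al v k + ?g *\<^sub>R (?v ** cadj ?v)"
    by (simp add: adi_ZZ_def)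
  have rt: "res_true A B al v (Suc k) = res_true A B al v k + ?g *\<^sub>R (?K ** (?v ** cadj ?v) + (?v ** cadj ?v) ** cadj ?K)"
    unfolding res_true_def ZZ by (simp add: mm_ldistrib mm_rdistrib mm_sl mm_sr algebra_simps)
  have wd: "?w = ?s + (?K + mat (al (Suc k))) ** ?v"
    by (simp add: adi_s_def)
  have st: "adi_w B al v (Suc k) ** cadj (adi_w B al v (Suc k)) = ?w ** cadj ?w + ?g *\<^sub>R (?s ** cadj ?v + ?v ** cadj ?s)
     + ?g *\<^sub>R (?K ** (?v ** cadj ?v) + (?v ** cadj ?v) ** cadj ?K)"
    using step_id[OF wd refl] by simp
  show ?case unfolding rt Suc st by (simp add: algebra_simps)
qed

lemma key_real:
  fixes t W s g e J :: real
  assumes "0 \<le> t" "0 \<le> W" "0 \<le> s" "0 < g" "0 < J" "0 < e"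
    and "t \<le> (sqrt (W\<^sup>2 + 2 * e / (s * g * J)) - W) / 2"
  shows "2 * g * s * t * (W + t) \<le> e / J"
proof (cases "s = 0")
  case True then show ?thesis using assms by simp
next
  case False
  then have sp: "0 < s" using assms by simp
  let ?c = "2 * e / (s * g * J)"
  have c0: "0 \<le> ?c" using assms sp by simp
  have "2 * t + W \<le> sqrt (W\<^sup>2 + ?c)" using assms(7) by simp
  then have "(2 * t + W)\<^sup>2 \<le> (sqrt (W\<^sup>2 + ?c))\<^sup>2"
    by (rule power_mono) (use assms in simp)
  then have "(2 * t + W)\<^sup>2 \<le> W\<^sup>2 + ?c" using c0 by simp
  then have "4 * t * (t + W) \<le> ?c" by (simp add: power2_eq_square algebra_simps)
  then have "(s * g * J) * (4 * t * (t + W)) \<le> (s * g * J) * ?c"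
    by (rule mult_left_mono) (use assms sp in simp)
  also have "\<dots> = 2 * e" using sp assms by simp
  finally have "2 * g * s * t * (W + t) * J \<le> e" by (simp add: algebra_simps)
  then show ?thesis using assms by (simp add: pos_le_divide_eq)
qed

lemma sq_step:
  fixes a b e W t gs q :: real
  assumes "0 \<le> a" "0 \<le> e" "b \<le> a + e" "0 \<le> b" "a \<le> W" "e = gs * t" "gs \<le> 2" "0 \<le> t"
    "gs * (2 * t * (W + t)) \<le> q"
  shows "b\<^sup>2 \<le> a\<^sup>2 + q"
proof -
  have "b\<^sup>2 \<le> (a + e)\<^sup>2" using assms by (intro power_mono) auto
  also have "\<dots> = a\<^sup>2 + e * (2 * a + e)" by (simp add: power2_eq_square algebra_simps)
  also have "e * (2 * a + e) \<le> e * (2 * W + 2 * t)"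
  proof (rule mult_left_mono)
    have "e \<le> 2 * t" using assms by (metis mult_right_mono)
    then show "2 * a + e \<le> 2 * W + 2 * t" using assms by simp
  qed (use assms in simp)
  also have "\<dots> = gs * (2 * t * (W + t))" using assms by (simp add: algebra_simps)
  finally show ?thesis using assms by simp
qed

fun prp :: "(nat \<Rightarrow> complex^'n^'n) \<Rightarrow> nat \<Rightarrow> nat \<Rightarrow> complex^'r^'n \<Rightarrow> complex^'r^'n" where
  "prp C i 0 X = X"
| "prp C i (Suc m) X = C (Suc (i + m)) ** prp C i m X"

lemma prp_diff: "prp C i m (X - Y) = prp C i m X - prp C i m Y"
  by (induction m) (simp_all add: mm_ldiff)

lemma prp_norm: "(\<And>k. i < k \<Longrightarrow> k \<le> i + m \<Longrightarrow> spnorm (C k) \<le> 1) \<Longrightarrow> spnorm (prp C i m X) \<le> spnorm X"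
proof (induction m)
  case 0 then show ?case by simp
next
  case (Suc m)
  have "spnorm (prp C i (Suc m) X) \<le> spnorm (C (Suc (i + m))) * spnorm (prp C i m X)"
    by (simp add: sp_mult)
  also have "\<dots> \<le> 1 * spnorm X"
    using Suc by (intro mult_mono) (auto simp: sp_nonneg)
  finally show ?case by simp
qed

lemma prp_shift: "prp C j (Suc m) X = prp C (Suc j) m (C (Suc j) ** X)"
  by (induction m) simp_all

lemma prp_exact: "prp (\<lambda>k. cayley A (al k)) 0 m (cmat B) = w_exact A B al m"
  by (induction m) simp_all

lemma minv: "invertible (M::complex^'n^'n) \<Longrightarrow> M ** matrix_inv M = mat 1 \<and> matrix_inv M ** M = mat 1"
  unfolding invertible_def matrix_inv_def by (rule someI_ex)

lemma cay_eq:
  assumes "invertible (cmat A + mat a)"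
  shows "cayley A a = mat 1 + gsq a *\<^sub>R matrix_inv (cmat A + mat a)"
proof -
  have e: "cmat A - mat (cnj a) = (cmat A + mat a) + gsq a *\<^sub>R mat 1"
    by (simp add: vec_eq_iff mat_def gsq_def) (simp add: complex_eq_iff)
  have "cayley A a = matrix_inv (cmat A + mat a) ** (cmat A + mat a) + gsq a *\<^sub>R (matrix_inv (cmat A + mat a) ** mat 1)"
    unfolding cayley_def e by (simp only: mm_ldistrib mm_sr)
  then show ?thesis using minv[OF assms] by simp
qed

theorem corollary3p8:
  fixes A :: "real^'n^'n" and B :: "real^'r^'n"
    and al :: "nat \<Rightarrow> complex" and v :: "nat \<Rightarrow> complex^'r^'n"
    and jmax :: nat and eps :: real
  assumes "jmax \<ge> 1" and "0 < eps" and "eps < 1"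
    and "\<And>j. 1 \<le> j \<Longrightarrow> j \<le> jmax \<Longrightarrow> Re (al j) < 0"
    and "\<And>j. 1 \<le> j \<Longrightarrow> j \<le> jmax \<Longrightarrow> invertible (cmat A + mat (al j))"
    and "\<And>j. 1 \<le> j \<Longrightarrow> j \<le> jmax \<Longrightarrow> spnorm (cayley A (al j)) < 1"
    and "\<And>k. 1 \<le> k \<Longrightarrow> k \<le> jmax \<Longrightarrow>
           spnorm (adi_s A B al v k) \<le>
             (sqrt ((spnorm (adi_w B al v (k - 1)))\<^sup>2
                    + 2 * eps / (spnorm (matrix_inv (cmat A + mat (al k))) * gsq (al k) * real jmax))
              - spnorm (adi_w B al v (k - 1))) / 2"
  shows "spnorm (res_true A B al v jmax) \<le> spnorm (res_exact A B al jmax) + 2 * eps"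
proof -
  define J where "J = jmax"
  define g where "g i = gsq (al i)" for i
  define M where "M i = cmat A + mat (al i)" for i
  define Mi where "Mi i = matrix_inv (M i)" for i
  define sg where "sg i = spnorm (Mi i)" for i
  define C where "C i = cayley A (al i)" for i
  define w where "w i = adi_w B al v i" for i
  define s where "s i = adi_s A B al v i" for i
  define t where "t i = spnorm (s i)" for i
  define W where "W i = spnorm (w i)" for i
  have J0: "0 < real J" using assms(1) J_def by simp
  have gpos: "0 < g i" if "1 \<le> i" "i \<le> J" for i
    using assms(4)[OF that[unfolded J_def]] by (simp add: g_def gsq_def)
  have inv: "M i ** Mi i = mat 1 \<and> Mi i ** M i = mat 1" if "1 \<le> i" "i \<le> J" for i
    unfolding Mi_def M_def using minv assms(5) that J_def by blast
  have Ceq: "C i = mat 1 + g i *\<^sub>R Mi i" if "1 \<le> i" "i \<le> J" for i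
    unfolding C_def g_def Mi_def M_def using cay_eq assms(5) that J_def by blast
  have C1: "spnorm (C i) \<le> 1" if "1 \<le> i" "i \<le> J" for i
    using assms(6)[of i] that J_def C_def by fastforce
  have gs2: "g i * sg i \<le> 2" if "1 \<le> i" "i \<le> J" for i
  proof -
    have "g i *\<^sub>R Mi i = C i - mat 1" using Ceq[OF that] by simp
    then have "spnorm (C i - mat 1) = spnorm (g i *\<^sub>R Mi i)" by simp
    then have "g i * sg i = spnorm (C i - mat 1)"
      using gpos[OF that] by (simp add: sg_def sp_scaleR)
    also have "\<dots> \<le> spnorm (C i) + spnorm (mat 1 :: complex^'n^'n)" by (rule sp_diff)
    also have "\<dots> \<le> 1 + 1" by (rule add_mono[OF C1[OF that] sp_mat1])
    finally show ?thesis by simp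
  qed
  have sdef: "s (Suc j) = w j - M (Suc j) ** v (Suc j)" for j
    by (simp add: s_def w_def M_def adi_s_def)
  have wrec: "w (Suc j) = w j + g (Suc j) *\<^sub>R v (Suc j)" for j
    by (simp add: w_def g_def)
  have veq: "v (Suc j) = Mi (Suc j) ** (w j - s (Suc j))" if "Suc j \<le> J" for j
  proof -
    have "w j - s (Suc j) = M (Suc j) ** v (Suc j)" by (simp add: sdef)
    then have "Mi (Suc j) ** (w j - s (Suc j)) = (Mi (Suc j) ** M (Suc j)) ** v (Suc j)"
      by (simp add: matrix_mul_assoc)
    then show ?thesis using inv[of "Suc j"] that by simp
  qed
  have vnorm: "spnorm (v (Suc j)) \<le> sg (Suc j) * (W j + t (Suc j))" if "Suc j \<le> J" for j
  proof -
    have "spnorm (v (Suc j)) \<le> sg (Suc j) * spnorm (w j - s (Suc j))"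
      unfolding veq[OF that] sg_def by (rule sp_mult)
    also have "\<dots> \<le> sg (Suc j) * (W j + t (Suc j))"
      unfolding W_def t_def by (intro mult_left_mono sp_diff) (simp add: sg_def sp_nonneg)
    finally show ?thesis .
  qed
  have wC: "w (Suc j) - C (Suc j) ** w j = - (g (Suc j) *\<^sub>R (Mi (Suc j) ** s (Suc j)))" if "Suc j \<le> J" for j
  proof -
    have "C (Suc j) ** w j = w j + g (Suc j) *\<^sub>R (Mi (Suc j) ** w j)"
      using Ceq[of "Suc j"] that by (simp add: mm_rdistrib mm_sl)
    moreover have "w (Suc j) = w j + g (Suc j) *\<^sub>R (Mi (Suc j) ** w j) - g (Suc j) *\<^sub>R (Mi (Suc j) ** s (Suc j))"
      unfolding wrec veq[OF that] by (simp add: mm_ldiff algebra_simps)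
    ultimately show ?thesis by simp
  qed
  have key: "2 * g k * sg k * t k * (W (k - 1) + t k) \<le> eps / J" if "1 \<le> k" "k \<le> J" for k
  proof (rule key_real)
    show "t k \<le> (sqrt ((W (k - 1))\<^sup>2 + 2 * eps / (sg k * g k * real J)) - W (k - 1)) / 2"
      using assms(7)[of k] that unfolding J_def t_def s_def W_def w_def sg_def Mi_def M_def g_def by simp
  qed (use gpos[OF that] J0 assms(2) in \<open>simp_all add: t_def W_def sg_def sp_nonneg\<close>)
  have termb: "spnorm (g i *\<^sub>R (s i ** cadj (v i) + v i ** cadj (s i))) \<le> eps / J"
    if "i \<in> {1..J}" for i
  proof -
    have "i \<noteq> 0" using that by simp
    then obtain j where ij: "i = Suc j" using not0_implies_Suc by blast
    have iJ: "Suc j \<le> J" "1 \<le> Suc j" using that ij by auto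
    have "spnorm (g i *\<^sub>R (s i ** cadj (v i) + v i ** cadj (s i)))
        = g i * spnorm (s i ** cadj (v i) + v i ** cadj (s i))"
      using gpos[of i] that by (simp add: sp_scaleR)
    also have "\<dots> \<le> g i * (2 * t i * spnorm (v i))"
    proof (rule mult_left_mono)
      have "spnorm (s i ** cadj (v i) + v i ** cadj (s i)) \<le> spnorm (s i ** cadj (v i)) + spnorm (v i ** cadj (s i))"
        by (rule sp_add)
      also have "\<dots> \<le> t i * spnorm (v i) + spnorm (v i) * t i"
        using add_mono[OF sp_mult[of "s i" "cadj (v i)"] sp_mult[of "v i" "cadj (s i)"]]
        by (simp only: sp_cadj t_def)
      finally show "spnorm (s i ** cadj (v i) + v i ** cadj (s i)) \<le> 2 * t i * spnorm (v i)" by simp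
    qed (use gpos[of i] that in simp)
    also have "\<dots> \<le> g i * (2 * t i * (sg i * (W j + t i)))"
      using vnorm[OF iJ(1)] gpos[OF iJ(2) iJ(1)] ij
      by (intro mult_left_mono) (auto simp: t_def sp_nonneg)
    also have "\<dots> = 2 * g i * sg i * t i * (W (i - 1) + t i)" using ij by simp
    also have "\<dots> \<le> eps / J" using key[of i] that by simp
    finally show ?thesis .
  qed
  have sumb: "spnorm (\<Sum>i=1..J. g i *\<^sub>R (s i ** cadj (v i) + v i ** cadj (s i))) \<le> eps"
  proof -
    have "spnorm (\<Sum>i=1..J. g i *\<^sub>R (s i ** cadj (v i) + v i ** cadj (s i)))
        \<le> (\<Sum>i=1..J. spnorm (g i *\<^sub>R (s i ** cadj (v i) + v i ** cadj (s i))))"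
      by (rule sp_sum) simp
    also have "\<dots> \<le> (\<Sum>i=1..J. eps / J)" by (rule sum_mono) (rule termb)
    also have "\<dots> = eps" using J0 by simp
    finally show ?thesis .
  qed
  have r1: "spnorm (res_true A B al v J) \<le> (W J)\<^sup>2 + eps"
  proof -
    have "spnorm (res_true A B al v J) \<le> spnorm (w J ** cadj (w J))
       + spnorm (\<Sum>i=1..J. g i *\<^sub>R (s i ** cadj (v i) + v i ** cadj (s i)))"
      unfolding res_id w_def s_def g_def by (rule sp_diff)
    then show ?thesis using sumb by (simp add: sp_rank W_def)
  qed
  define u where "u i = prp C i (J - i) (w i)" for i
  have u0: "u 0 = w_exact A B al J" unfolding u_def C_def w_def by (simp add: prp_exact)
  have uJ: "u J = w J" by (simp add: u_def)
  have uW: "spnorm (u j) \<le> W j" for j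
    unfolding u_def W_def by (rule prp_norm) (use C1 in auto)
  have ustep: "(spnorm (u (Suc j)))\<^sup>2 \<le> (spnorm (u j))\<^sup>2 + eps / J" if "Suc j \<le> J" for j
  proof -
    have "u j = prp C (Suc j) (J - Suc j) (C (Suc j) ** w j)"
    proof -
      have "J - j = Suc (J - Suc j)" using that by simp
      then show ?thesis unfolding u_def by (simp only: prp_shift)
    qed
    then have "u (Suc j) - u j = prp C (Suc j) (J - Suc j) (- (g (Suc j) *\<^sub>R (Mi (Suc j) ** s (Suc j))))"
      unfolding u_def by (simp add: prp_diff[symmetric] wC[OF that])
    then have "spnorm (u (Suc j) - u j) \<le> spnorm (- (g (Suc j) *\<^sub>R (Mi (Suc j) ** s (Suc j))))"
      by (simp only:) (rule prp_norm, use C1 in auto)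
    also have "\<dots> \<le> g (Suc j) * sg (Suc j) * t (Suc j)"
      using gpos[of "Suc j"] that sp_mult[of "Mi (Suc j)" "s (Suc j)"]
      by (simp add: sp_uminus sp_scaleR sg_def t_def)
    finally have d: "spnorm (u (Suc j) - u j) \<le> g (Suc j) * sg (Suc j) * t (Suc j)" .
    have tr: "spnorm (u (Suc j)) \<le> spnorm (u j) + g (Suc j) * sg (Suc j) * t (Suc j)"
      using sp_add[of "u j" "u (Suc j) - u j"] d by simp
    show ?thesis
    proof (rule sq_step[OF sp_nonneg _ tr sp_nonneg uW refl gs2])
      show "0 \<le> g (Suc j) * sg (Suc j) * t (Suc j)"
        using gpos[of "Suc j"] that by (simp add: sg_def t_def sp_nonneg)
      show "0 \<le> t (Suc j)" by (simp add: t_def sp_nonneg)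
      show "g (Suc j) * sg (Suc j) * (2 * t (Suc j) * (W j + t (Suc j))) \<le> eps / real J"
        using key[of "Suc j"] that by (simp add: algebra_simps)
    qed (use that in auto)
  qed
  have uind: "j \<le> J \<Longrightarrow> (spnorm (u j))\<^sup>2 \<le> (spnorm (u 0))\<^sup>2 + j * (eps / J)" for j
  proof (induction j)
    case 0 then show ?case by simp
  next
    case (Suc j)
    have e: "real (Suc j) * (eps / J) = real j * (eps / J) + eps / J" using J0 by (simp add: field_simps)
    show ?case using Suc.IH Suc.prems ustep[of j] unfolding e by linarith
  qed
  have "(W J)\<^sup>2 \<le> (spnorm (w_exact A B al J))\<^sup>2 + eps"
    using uind[of J] J0 uJ u0 by (simp add: W_def)
  then have "spnorm (res_true A B al v J) \<le> spnorm (res_exact A B al J) + 2 * eps"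
    using r1 by (simp add: res_exact_def sp_rank)
  then show ?thesis by (simp add: J_def)
qed

end
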